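(* Let $r:\mathcal T\to\mathbb N\cup\{0\}$ be a function satisfying: (1) $r(\mathscr X)=0$ iff $\mathscr X=\mathbf 0$, and $r(\mathscr X)=1$ iff $\mathscr X$ is a rank-one tensor; (2) $r$ is constant on equivalence classes of $\sim$; (3) if $\mathscr X\in\mathbb R^{I_1\times\cdots\times I_N}$ has exactly two modes $n_1<n_2$ with $I_{n_1}>1$ and $I_{n_2}>1$, and $\mathbf X\in\mathbb R^{I_{n_1}\times I_{n_2}}$ is the matrix associated to $\mathscr X$, then $r(\mathscr X)=\operatorname{rank}(\mathbf X)$; (4) if $\mathscr X\in\mathbb R^{I_1\times\cdots\times I_N}$ is nonzero, not rank-one, and has at least three modes $n$ with $I_n>1$, then $r(\mathscr X)=\max\{I_1,\dots,I_N\}$. Then $r$ is a QZC rank function.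
   Context: $\mathcal T$ is the collection of all real tensors (of all orders $N\ge1$ and all sizes). A rank-one tensor is one of the form $x_{i_1\cdots i_N}=a^{(1)}_{i_1}\cdots a^{(N)}_{i_N}$ with all $\mathbf a^{(n)}$ nonzero vectors. $\mathscr I_{M,N}$ is the order-$N$ tensor of size $M\times\cdots\times M$ with $1$ in positions $(i,\dots,i)$ and $0$ elsewhere. A subtensor of $\mathscr X\in\mathbb R^{I_1\times\cdots\times I_N}$ is a tensor $\mathscr Y\in\mathbb R^{J_1\times\cdots\times J_N}$ with $y_{j_1\cdots j_N}=x_{i_{1j_1}\cdots i_{Nj_N}}$ for some indices $1\le i_{n1}<\cdots<i_{nJ_n}\le I_n$. For $\pi\in S_N$, the mode-permutation of $\mathscr X$ is the tensor $\mathscr Y$ with $y_{i_1\cdots i_N}=x_{i_{\pi(1)}\cdots i_{\pi(N)}}$. The relation $\sim$ is the smallest equivalence relation on $\mathcal T$ with $\mathscr X\sim\alpha\mathscr X$ for all $\alpha\in\mathbb R\setminus\{0\}$ and $\mathscr X\sim\mathscr Y$ whenever $\mathscr Y$ is a mode-permutation of $\mathscr X$. A QZC rank function is a function $s:\mathcal T\to\mathbb N\cup\{0\}$ such that: (QZC1) $s(\mathscr X)=0$ iff $\mathscr X=\mathbf 0$, and $s(\mathscr X)=1$ iff $\mathscr X$ is rank-one; (QZC2) $s(\mathscr I_{M,N})=M$ whenever $N\ge2$; (QZC3) if $\mathscr X\in\mathbb R^{I_1\times I_2\times1\times\cdots\times1}$ then $s(\mathscr X)$ equals the rank of the corresponding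 $I_1\times I_2$ matrix; (QZC4) $s(\alpha\mathscr X)=s(\mathscr X)$ for $\alpha\ne0$; (QZC5) $s$ is invariant under mode-permutations; (QZC6) $s(\mathscr Y)\le s(\mathscr X)$ whenever $\mathscr Y$ is a subtensor of $\mathscr X$. *)

theory Defs
  imports "Jordan_Normal_Form.DL_Rank" "HOL-Combinatorics.Permutations"
begin

text \<open>A real tensor of order N = length d and size d!0 x ... x d!(N-1) is represented by the
pair (d, f) where f gives the entries at 0-based multi-indices and is 0 outside the index range.\<close>

type_synonym tensor = "nat list \<times> (nat list \<Rightarrow> real)"

definition dims :: "tensor \<Rightarrow> nat list" where "dims X = fst X"
definition entry :: "tensor \<Rightarrow> nat list \<Rightarrow> real" where "entry X = snd X"

definition valid_idx :: "nat list \<Rightarrow> nat list \<Rightarrow> bool" where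
  "valid_idx d is \<longleftrightarrow> length is = length d \<and> (\<forall>k<length d. is ! k < d ! k)"

definition is_tensor :: "tensor \<Rightarrow> bool" where
  "is_tensor X \<longleftrightarrow> dims X \<noteq> [] \<and> (\<forall>k\<in>set (dims X). 0 < k)
      \<and> (\<forall>is. \<not> valid_idx (dims X) is \<longrightarrow> entry X is = 0)"

definition is_zero :: "tensor \<Rightarrow> bool" where
  "is_zero X \<longleftrightarrow> (\<forall>is. entry X is = 0)"

definition rank_one :: "tensor \<Rightarrow> bool" where
  "rank_one X \<longleftrightarrow> (\<exists>a :: nat \<Rightarrow> nat \<Rightarrow> real.
      (\<forall>n<length (dims X). \<exists>i<dims X ! n. a n i \<noteq> 0) \<and>
      (\<forall>is. valid_idx (dims X) is \<longrightarrow> entry X is = (\<Prod>n<length (dims X). a n (is ! n))))"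

definition scale_tensor :: "real \<Rightarrow> tensor \<Rightarrow> tensor" where
  "scale_tensor \<alpha> X = (dims X, \<lambda>is. \<alpha> * entry X is)"

text \<open>Mode-permutation by \<pi> \<in> S_N (acting on {0..<N}):
  y_{i_1..i_N} = x_{i_{\<pi>(1)}..i_{\<pi>(N)}}; hence the size of Y in mode \<pi>(k) is I_k.\<close>
definition mode_perm :: "(nat \<Rightarrow> nat) \<Rightarrow> tensor \<Rightarrow> tensor" where
  "mode_perm \<pi> X = (let N = length (dims X); d' = map (\<lambda>j. dims X ! inv_into UNIV \<pi> j) [0..<N] in
     (d', \<lambda>is. if valid_idx d' is then entry X (map (\<lambda>k. is ! \<pi> k) [0..<N]) else 0))"

definition is_mode_perm :: "tensor \<Rightarrow> tensor \<Rightarrow> bool" where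
  "is_mode_perm Y X \<longleftrightarrow> (\<exists>\<pi>. \<pi> permutes {..<length (dims X)} \<and> Y = mode_perm \<pi> X)"

inductive tsim :: "tensor \<Rightarrow> tensor \<Rightarrow> bool" where
  tsim_refl: "is_tensor X \<Longrightarrow> tsim X X"
| tsim_scale: "is_tensor X \<Longrightarrow> \<alpha> \<noteq> 0 \<Longrightarrow> tsim X (scale_tensor \<alpha> X)"
| tsim_perm: "is_tensor X \<Longrightarrow> is_mode_perm Y X \<Longrightarrow> tsim X Y"
| tsim_sym: "tsim X Y \<Longrightarrow> tsim Y X"
| tsim_trans: "tsim X Y \<Longrightarrow> tsim Y Z \<Longrightarrow> tsim X Z"

definition diag_tensor :: "nat \<Rightarrow> nat \<Rightarrow> tensor" where
  "diag_tensor M N = (replicate N M,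
     \<lambda>is. if valid_idx (replicate N M) is \<and> (\<forall>k<N. is ! k = is ! 0) then 1 else 0)"

definition is_subtensor :: "tensor \<Rightarrow> tensor \<Rightarrow> bool" where
  "is_subtensor Y X \<longleftrightarrow> is_tensor Y \<and> length (dims Y) = length (dims X) \<and>
     (\<exists>\<sigma> :: nat \<Rightarrow> nat \<Rightarrow> nat.
        (\<forall>n<length (dims X). strict_mono_on {..<dims Y ! n} (\<sigma> n) \<and>
                              (\<forall>j<dims Y ! n. \<sigma> n j < dims X ! n)) \<and>
        (\<forall>is. valid_idx (dims Y) is \<longrightarrow>
              entry Y is = entry X (map (\<lambda>n. \<sigma> n (is ! n)) [0..<length (dims X)])))"

text \<open>Rank of a real matrix of variable size (Jordan_Normal_Form: dimension of the column space).\<close>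
definition mat_rank :: "real mat \<Rightarrow> nat" where
  "mat_rank A = vec_space.rank (dim_row A) A"

definition assoc_matrix :: "tensor \<Rightarrow> nat \<Rightarrow> nat \<Rightarrow> real mat" where
  "assoc_matrix X n1 n2 = mat (dims X ! n1) (dims X ! n2)
     (\<lambda>(i, j). entry X ((replicate (length (dims X)) 0)[n1 := i, n2 := j]))"

definition qzc_rank :: "(tensor \<Rightarrow> nat) \<Rightarrow> bool" where
  "qzc_rank s \<longleftrightarrow>
     (\<forall>X. is_tensor X \<longrightarrow> ((s X = 0 \<longleftrightarrow> is_zero X) \<and> (s X = 1 \<longleftrightarrow> rank_one X))) \<and>
     (\<forall>M N. 1 \<le> M \<longrightarrow> 2 \<le> N \<longrightarrow> s (diag_tensor M N) = M) \<and>
     (\<forall>X. is_tensor X \<longrightarrow> 2 \<le> length (dims X) \<longrightarrow>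
          (\<forall>k. 2 \<le> k \<longrightarrow> k < length (dims X) \<longrightarrow> dims X ! k = 1) \<longrightarrow>
          s X = mat_rank (assoc_matrix X 0 1)) \<and>
     (\<forall>X \<alpha>. is_tensor X \<longrightarrow> \<alpha> \<noteq> 0 \<longrightarrow> s (scale_tensor \<alpha> X) = s X) \<and>
     (\<forall>X Y. is_tensor X \<longrightarrow> is_mode_perm Y X \<longrightarrow> s Y = s X) \<and>
     (\<forall>X Y. is_tensor X \<longrightarrow> is_subtensor Y X \<longrightarrow> s Y \<le> s X)"

end

theory Submission
  imports Defs
begin


lemma rank_sub_le:
  fixes A :: "real mat"
  assumes A: "A \<in> carrier_mat n nc"
    and f: "\<forall>i<m. f i < n" and g: "\<forall>j<k. g j < nc"
  shows "vec_space.rank m (mat m k (\<lambda>(i,j). A $$ (f i, g j))) \<le> vec_space.rank n A"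
proof -
  define B where "B = mat m k (\<lambda>(i,j). A $$ (f i, g j))"
  have Bc: "B \<in> carrier_mat m k" unfolding B_def by simp
  let ?li = "LinearCombinations.module.lin_indpt class_ring (module_vec TYPE(real) m)"
  interpret Vm: vec_space "TYPE(real)" m .
  obtain S where maxS: "maximal S (\<lambda>T. T \<subseteq> set (cols B) \<and> ?li T)"
    using maximal_exists[of "(\<lambda>T. T \<subseteq> set (cols B) \<and> ?li T)" "card (set (cols B))" "{}"]
    by (meson List.finite_set card_mono empty_iff empty_subsetI Vm.finite_lin_indpt2 rev_finite_subset)
  have rB: "vec_space.rank m B = card S" using vec_space.rank_card_indpt[OF Bc maxS] .
  have SB: "S \<subseteq> set (cols B)" and liS: "?li S" using maxS unfolding maximal_def by auto
  have "finite S" using SB finite_subset by blast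
  then obtain xs where xs: "distinct xs" "set xs = S" using finite_distinct_list by blast
  define h where "h x = (SOME j. j < k \<and> x = col B j)" for x
  have h: "h x < k \<and> x = col B (h x)" if "x \<in> S" for x
  proof -
    from that SB obtain j where "j < k" "x = col B j"
      using Bc by (metis cols_length cols_nth in_set_conv_nth carrier_matD(2) subsetD)
    then show ?thesis unfolding h_def by (metis (mono_tags, lifting) someI)
  qed
  have colB: "col B j $ i = A $$ (f i, g j)" if "i < m" "j < k" for i j
    using that unfolding B_def by simp
  define ys where "ys = map (\<lambda>x. col A (g (h x))) xs"
  have ysA: "set ys \<subseteq> set (cols A)"
  proof
    fix y assume "y \<in> set ys"
    then obtain x where "x \<in> S" "y = col A (g (h x))" unfolding ys_def using xs by auto
    then have "g (h x) < nc" using h g by blast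
    then show "y \<in> set (cols A)" using A \<open>y = _\<close> by (metis cols_length cols_nth nth_mem carrier_matD(2))
  qed
  have inj: "inj_on (\<lambda>x. col A (g (h x))) S"
  proof (rule inj_onI)
    fix x y assume xy: "x \<in> S" "y \<in> S" "col A (g (h x)) = col A (g (h y))"
    have "col B (h x) = col B (h y)"
    proof (rule eq_vecI)
      fix i assume "i < dim_vec (col B (h y))"
      then have i: "i < m" using Bc by simp
      have "col A (g (h x)) $ f i = col A (g (h y)) $ f i" using xy by simp
      then show "col B (h x) $ i = col B (h y) $ i"
      proof -
        have "f i < n" "g (h x) < nc" "g (h y) < nc" using f i g h xy by auto
        then have "A $$ (f i, g (h x)) = A $$ (f i, g (h y))" using A \<open>col A (g (h x)) $ f i = _\<close> by simp
        moreover have "h x < k" "h y < k" using h xy by auto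
        ultimately show ?thesis using colB[OF i] by presburger
      qed
    qed simp
    then show "x = y" using h xy by metis
  qed
  have dys: "distinct ys" unfolding ys_def using xs inj by (simp add: distinct_map)
  have lys: "length ys = length xs" unfolding ys_def by simp
  have Sc: "set xs \<subseteq> carrier_vec m" using xs SB Bc cols_dim by (metis carrier_matD(1) subset_trans)
  have ysc: "set ys \<subseteq> carrier_vec n" using ysA A cols_dim by (metis carrier_matD(1) subset_trans)
  define A' where "A' = mat_of_cols n ys"
  define B' where "B' = mat_of_cols m xs"
  have cA': "cols A' = ys" unfolding A'_def using ysc by simp
  have cB': "cols B' = xs" unfolding B'_def using Sc by simp
  have liA: "LinearCombinations.module.lin_indpt class_ring (module_vec TYPE(real) n) (set ys)"
  proof (rule ccontr)
    assume "\<not> ?thesis"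
    then have "LinearCombinations.module.lin_dep class_ring (module_vec TYPE(real) n) (set (cols A'))" using cA' by simp
    then obtain v where v: "v \<in> carrier_vec (length ys)" "v \<noteq> 0\<^sub>v (length ys)" "A' *\<^sub>v v = 0\<^sub>v n"
      using vec_space.lin_depE[of A' n "length ys"] cA' dys unfolding A'_def by auto
    have "B' *\<^sub>v v = 0\<^sub>v m"
    proof (rule eq_vecI)
      fix i assume "i < dim_vec (0\<^sub>v m)"
      then have i: "i < m" by simp
      have "(B' *\<^sub>v v) $ i = (\<Sum>t<length xs. xs ! t $ i * v $ t)"
        using i v(1) lys unfolding B'_def mat_of_cols_def
        by (simp add: mult_mat_vec_def scalar_prod_def row_def atLeast0LessThan)
      also have "\<dots> = (\<Sum>t<length ys. ys ! t $ f i * v $ t)"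
      proof (rule sum.cong)
        fix t assume "t \<in> {..<length ys}"
        then have t: "t < length xs" using lys by simp
        have xS: "xs ! t \<in> S" using xs t by auto
        have "xs ! t $ i = col B (h (xs!t)) $ i" using h[OF xS] by simp
        also have "\<dots> = A $$ (f i, g (h (xs!t)))" using colB i h xS by blast
        also have "\<dots> = ys ! t $ f i" unfolding ys_def using t f i A g h xS by simp
        finally show "xs ! t $ i * v $ t = ys ! t $ f i * v $ t" by simp
      qed (simp add: lys)
      also have "\<dots> = (A' *\<^sub>v v) $ f i"
        using i f v(1) unfolding A'_def mat_of_cols_def
        by (simp add: mult_mat_vec_def scalar_prod_def row_def atLeast0LessThan)
      also have "\<dots> = 0" using v(3) f i by simp
      finally show "(B' *\<^sub>v v) $ i = 0\<^sub>v m $ i" using i by simp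
    qed (simp add: B'_def)
    then have "LinearCombinations.module.lin_dep class_ring (module_vec TYPE(real) m) (set (cols B'))"
      using vec_space.lin_depI[of B' m "length ys" v] v(1,2) cB' xs lys unfolding B'_def by auto
    then show False using liS cB' xs by simp
  qed
  have "card (set ys) \<le> vec_space.rank n A"
    using vec_space.rank_ge_card_indpt[OF A ysA liA] .
  moreover have "card (set ys) = card S" using dys xs lys distinct_card by metis
  ultimately show ?thesis using rB unfolding B_def by simp
qed


lemma mat_rank_le_col: "mat_rank A \<le> dim_col A"
  unfolding mat_rank_def by (rule vec_space.rank_le_nc) (rule carrier_matI, auto)

lemma mat_rank_one_mat: "mat_rank (1\<^sub>m M :: real mat) = M"
  unfolding mat_rank_def using vec_space.det_rank_iff[of "1\<^sub>m M :: real mat" M] by simp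

lemma mat_rank_zero:
  fixes A :: "real mat"
  assumes "\<forall>i<dim_row A. \<forall>j<dim_col A. A $$ (i,j) = 0"
  shows "mat_rank A = 0"
proof -
  have "A = 0\<^sub>m (dim_row A) (dim_col A)" using assms by (intro eq_matI) auto
  then show ?thesis unfolding mat_rank_def using vec_space.rank_0I by metis
qed

lemma mat_rank_pos:
  fixes A :: "real mat"
  assumes "i < dim_row A" "j < dim_col A" "A $$ (i,j) \<noteq> 0"
  shows "1 \<le> mat_rank A"
proof -
  have A: "A \<in> carrier_mat (dim_row A) (dim_col A)" by auto
  have "vec_space.rank 1 (mat 1 1 (\<lambda>(a,b). A $$ ((\<lambda>_. i) a, (\<lambda>_. j) b))) \<le> vec_space.rank (dim_row A) A"
    by (rule rank_sub_le[OF A]) (use assms in auto)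
  moreover have "det (mat 1 1 (\<lambda>(a,b). A $$ ((\<lambda>_. i) a, (\<lambda>_. j) b))) \<noteq> 0"
    using assms by (subst det_single) auto
  then have "vec_space.rank 1 (mat 1 1 (\<lambda>(a,b). A $$ ((\<lambda>_. i) a, (\<lambda>_. j) b))) = 1"
    using vec_space.det_rank_iff[of "mat 1 1 (\<lambda>(a,b). A $$ ((\<lambda>_. i) a, (\<lambda>_. j) b))" 1] by simp
  ultimately show ?thesis unfolding mat_rank_def by simp
qed

lemma mat_rank_thin:
  fixes A :: "real mat"
  assumes "dim_row A = 1 \<or> dim_col A = 1"
  shows "mat_rank A \<le> 1"
proof -
  have A: "A \<in> carrier_mat (dim_row A) (dim_col A)" by auto
  show ?thesis
  proof (cases "dim_row A = 1")
    case True
    show ?thesis unfolding mat_rank_def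
      by (rule vec_space.rank_le_1_product_entries[OF A, of "\<lambda>_. 1" "\<lambda>c. A $$ (0, c)"]) (use True in auto)
  next
    case False
    then have "dim_col A = 1" using assms by auto
    then show ?thesis unfolding mat_rank_def
      by (intro vec_space.rank_le_1_product_entries[OF A, of "\<lambda>r. A $$ (r, 0)" "\<lambda>_. 1"]) auto
  qed
qed


lemma tensor_valid: "is_tensor X \<Longrightarrow> entry X is \<noteq> 0 \<Longrightarrow> valid_idx (dims X) is"
  unfolding is_tensor_def by auto

lemma tensor_pos: "is_tensor X \<Longrightarrow> n < length (dims X) \<Longrightarrow> 0 < dims X ! n"
  unfolding is_tensor_def by auto

lemma few_modes_rank_one:
  assumes T: "is_tensor X" and nz: "\<not> is_zero X" and m: "m < length (dims X)"
    and one: "\<forall>n<length (dims X). n \<noteq> m \<longrightarrow> dims X ! n = 1"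
  shows "rank_one X"
proof -
  let ?N = "length (dims X)"
  obtain i0 where i0: "entry X i0 \<noteq> 0" using nz unfolding is_zero_def by auto
  have vi0: "valid_idx (dims X) i0" using tensor_valid[OF T i0] .
  define a where "a n i = (if n = m then entry X (i0[m := i]) else 1)" for n i
  have eqi: "is = i0[m := is ! m]" if "valid_idx (dims X) is" for "is"
  proof (rule nth_equalityI)
    show "length is = length (i0[m := is ! m])" using that vi0 unfolding valid_idx_def by simp
    fix k assume "k < length is"
    then have k: "k < ?N" using that unfolding valid_idx_def by simp
    show "is ! k = i0[m := is ! m] ! k"
    proof (cases "k = m")
      case True then show ?thesis using k vi0 unfolding valid_idx_def by simp
    next
      case False
      then have "is ! k < 1" "i0 ! k < 1" using that vi0 one k unfolding valid_idx_def by auto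
      then show ?thesis using False by simp
    qed
  qed
  show ?thesis unfolding rank_one_def
  proof (intro exI[of _ a] conjI allI impI)
    fix n assume n: "n < ?N"
    show "\<exists>i<dims X ! n. a n i \<noteq> 0"
    proof (cases "n = m")
      case True
      then show ?thesis using vi0 n i0 unfolding a_def valid_idx_def by (intro exI[of _ "i0 ! m"]) auto
    next
      case False
      then show ?thesis using tensor_pos[OF T n] unfolding a_def by auto
    qed
  next
    fix "is" assume v: "valid_idx (dims X) is"
    have "(\<Prod>n<?N. a n (is ! n)) = (\<Prod>n<?N. if n = m then entry X (i0[m := is ! m]) else 1)"
      unfolding a_def by (rule prod.cong) auto
    also have "\<dots> = entry X (i0[m := is ! m])" using m by (subst prod.delta) auto
    also have "\<dots> = entry X is" using eqi[OF v] by simp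
    finally show "entry X is = (\<Prod>n<?N. a n (is ! n))" by simp
  qed
qed

definition NT :: "tensor \<Rightarrow> nat set" where
  "NT X = {n. n < length (dims X) \<and> 1 < dims X ! n}"

lemma NT_finite: "finite (NT X)" unfolding NT_def by auto

lemma NT_card_ge2:
  assumes T: "is_tensor X" and nz: "\<not> is_zero X" and nr: "\<not> rank_one X"
  shows "2 \<le> card (NT X)"
proof (rule ccontr)
  assume "\<not> 2 \<le> card (NT X)"
  then have "card (NT X) \<le> 1" by simp
  then obtain m where m: "m < length (dims X)" "NT X \<subseteq> {m}"
  proof (cases "NT X = {}")
    case True
    have "0 < length (dims X)" using T unfolding is_tensor_def by auto
    then show ?thesis using that True by blast
  next
    case False
    then obtain m where "m \<in> NT X" by auto
    then have "NT X = {m}" using \<open>card (NT X) \<le> 1\<close> NT_finite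
      by (metis card_le_Suc0_iff_eq singleton_iff subsetI subset_antisym One_nat_def)
    then show ?thesis using that \<open>m \<in> NT X\<close> unfolding NT_def by auto
  qed
  have "\<forall>n<length (dims X). n \<noteq> m \<longrightarrow> dims X ! n = 1"
  proof (intro allI impI)
    fix n assume "n < length (dims X)" "n \<noteq> m"
    then have "n \<notin> NT X" using m by auto
    then show "dims X ! n = 1" using tensor_pos[OF T \<open>n < _\<close>] \<open>n < _\<close> unfolding NT_def by auto
  qed
  then show False using few_modes_rank_one[OF T nz m(1)] nr by simp
qed


lemma sub_dims:
  assumes S: "is_subtensor Y X" and n: "n < length (dims X)"
  shows "dims Y ! n \<le> dims X ! n"
proof -
  obtain \<sigma> where s: "\<forall>n<length (dims X). strict_mono_on {..<dims Y ! n} (\<sigma> n) \<and> (\<forall>j<dims Y ! n. \<sigma> n j < dims X ! n)"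
    using S unfolding is_subtensor_def by blast
  have "inj_on (\<sigma> n) {..<dims Y ! n}" using s n strict_mono_on_imp_inj_on by blast
  moreover have "\<sigma> n ` {..<dims Y ! n} \<subseteq> {..<dims X ! n}" using s n by auto
  ultimately have "card {..<dims Y ! n} \<le> card {..<dims X ! n}" by (intro card_inj_on_le) auto
  then show ?thesis by simp
qed

lemma sub_nz:
  assumes S: "is_subtensor Y X" and nz: "\<not> is_zero Y"
  shows "\<not> is_zero X"
proof -
  obtain \<sigma> where s: "\<forall>is. valid_idx (dims Y) is \<longrightarrow>
              entry Y is = entry X (map (\<lambda>n. \<sigma> n (is ! n)) [0..<length (dims X)])"
    using S unfolding is_subtensor_def by blast
  obtain i where "entry Y i \<noteq> 0" using nz unfolding is_zero_def by auto
  moreover have "valid_idx (dims Y) i" using tensor_valid[OF _ \<open>entry Y i \<noteq> 0\<close>] S unfolding is_subtensor_def by blast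
  ultimately show ?thesis using s unfolding is_zero_def by metis
qed

lemma sub_r1:
  assumes S: "is_subtensor Y X" and r1: "rank_one X" and nz: "\<not> is_zero Y"
  shows "rank_one Y"
proof -
  let ?N = "length (dims X)"
  have TY: "is_tensor Y" and len: "length (dims Y) = ?N" using S unfolding is_subtensor_def by auto
  obtain \<sigma> where s: "\<forall>is. valid_idx (dims Y) is \<longrightarrow>
              entry Y is = entry X (map (\<lambda>n. \<sigma> n (is ! n)) [0..<?N])"
     and sb: "\<forall>n<?N. (\<forall>j<dims Y ! n. \<sigma> n j < dims X ! n)"
    using S unfolding is_subtensor_def by blast
  obtain a where a: "\<forall>is. valid_idx (dims X) is \<longrightarrow> entry X is = (\<Prod>n<?N. a n (is ! n))"
    using r1 unfolding rank_one_def by blast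
  define b where "b n j = a n (\<sigma> n j)" for n j
  have vmap: "valid_idx (dims X) (map (\<lambda>n. \<sigma> n (is ! n)) [0..<?N])" if "valid_idx (dims Y) is" for "is"
    using that sb len unfolding valid_idx_def by auto
  have ent: "entry Y is = (\<Prod>n<?N. b n (is ! n))" if "valid_idx (dims Y) is" for "is"
    using s that a vmap[OF that] unfolding b_def by simp
  obtain i where i: "entry Y i \<noteq> 0" using nz unfolding is_zero_def by auto
  have vi: "valid_idx (dims Y) i" using tensor_valid[OF TY i] .
  show ?thesis unfolding rank_one_def
  proof (intro exI[of _ b] conjI allI impI)
    fix n assume n: "n < length (dims Y)"
    have "(\<Prod>n<?N. b n (i ! n)) \<noteq> 0" using ent[OF vi] i by simp
    then have "b n (i ! n) \<noteq> 0" using n len by (simp add: prod_zero_iff)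
    moreover have "i ! n < dims Y ! n" using vi n unfolding valid_idx_def by simp
    ultimately show "\<exists>j<dims Y ! n. b n j \<noteq> 0" by blast
  next
    fix "is" assume "valid_idx (dims Y) is"
    then show "entry Y is = (\<Prod>n<length (dims Y). b n (is ! n))" using ent len by simp
  qed
qed

lemma NT_sub:
  assumes S: "is_subtensor Y X"
  shows "NT Y \<subseteq> NT X"
  using sub_dims[OF S] S unfolding NT_def is_subtensor_def by (auto intro: less_le_trans)

lemma Max_sub:
  assumes S: "is_subtensor Y X"
  shows "Max (set (dims Y)) \<le> Max (set (dims X))"
proof -
  have TY: "is_tensor Y" and len: "length (dims Y) = length (dims X)" using S unfolding is_subtensor_def by auto
  have ne: "dims Y \<noteq> []" using TY unfolding is_tensor_def by auto
  then have neX: "dims X \<noteq> []" using len by auto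
  show ?thesis
  proof (subst Max_le_iff, simp, simp add: ne, intro ballI)
    fix y assume "y \<in> set (dims Y)"
    then obtain n where n: "n < length (dims Y)" "y = dims Y ! n" by (auto simp: in_set_conv_nth)
    then have "y \<le> dims X ! n" using sub_dims[OF S] len by simp
    also have "\<dots> \<le> Max (set (dims X))" using n len by (intro Max_ge) auto
    finally show "y \<le> Max (set (dims X))" .
  qed
qed


lemma diag_dims[simp]: "dims (diag_tensor M N) = replicate N M"
  unfolding diag_tensor_def dims_def by simp

lemma diag_entry: "entry (diag_tensor M N) is =
   (if valid_idx (replicate N M) is \<and> (\<forall>k<N. is ! k = is ! 0) then 1 else 0)"
  unfolding diag_tensor_def entry_def by simp

lemma valid_rep: "valid_idx (replicate N M) is \<longleftrightarrow> length is = N \<and> (\<forall>k<N. is ! k < M)"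
  unfolding valid_idx_def by auto

lemma diag_tensor: "1 \<le> M \<Longrightarrow> 1 \<le> N \<Longrightarrow> is_tensor (diag_tensor M N)"
  unfolding is_tensor_def by (auto simp: diag_entry)

lemma diag_one_r1: "1 \<le> N \<Longrightarrow> rank_one (diag_tensor 1 N)"
  unfolding rank_one_def
  by (intro exI[of _ "\<lambda>_ _. 1"]) (auto simp: diag_entry valid_rep)

lemma diag_not_zero: "1 \<le> M \<Longrightarrow> \<not> is_zero (diag_tensor M N)"
  unfolding is_zero_def
  by (intro notI, drule spec[of _ "replicate N 0"]) (auto simp: diag_entry valid_rep)

lemma diag_not_r1:
  assumes M: "2 \<le> M" and N: "2 \<le> N"
  shows "\<not> rank_one (diag_tensor M N)"
proof
  assume "rank_one (diag_tensor M N)"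
  then obtain a where a: "\<And>is. valid_idx (replicate N M) is \<Longrightarrow> entry (diag_tensor M N) is = (\<Prod>n<N. a n (is ! n))"
    unfolding rank_one_def by auto
  have z: "(\<Prod>n<N. a n 0) = 1" using a[of "replicate N 0"] M by (simp add: diag_entry valid_rep)
  have o: "(\<Prod>n<N. a n 1) = 1" using a[of "replicate N 1"] M by (simp add: diag_entry valid_rep)
  let ?w = "(replicate N (1::nat))[0 := 0]"
  have "entry (diag_tensor M N) ?w = 0"
    using N by (auto simp: diag_entry valid_rep intro!: exI[of _ 1])
  then have w: "(\<Prod>n<N. a n (?w ! n)) = 0" using a[of ?w] M by (simp add: valid_rep nth_list_update)
  have "\<forall>n<N. a n 0 \<noteq> 0" using z by (metis lessThan_iff prod_zero_iff finite_lessThan zero_neq_one)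
  moreover have "\<forall>n<N. a n 1 \<noteq> 0" using o by (metis lessThan_iff prod_zero_iff finite_lessThan zero_neq_one)
  ultimately have "\<forall>n<N. a n (?w ! n) \<noteq> 0" by (simp add: nth_list_update)
  then show False using w by (simp add: prod_zero_iff)
qed

lemma diag_assoc: "assoc_matrix (diag_tensor M 2) 0 1 = 1\<^sub>m M"
  by (rule eq_matI) (auto simp: assoc_matrix_def diag_entry valid_rep less_2_cases_iff)

lemma qzc2:
  fixes r :: "tensor \<Rightarrow> nat"
  assumes h1: "\<forall>X. is_tensor X \<longrightarrow> ((r X = 0 \<longleftrightarrow> is_zero X) \<and> (r X = 1 \<longleftrightarrow> rank_one X))"
    and h3: "\<forall>X n1 n2. is_tensor X \<longrightarrow> n1 < n2 \<longrightarrow> n2 < length (dims X) \<longrightarrow>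
               {n. n < length (dims X) \<and> 1 < dims X ! n} = {n1, n2} \<longrightarrow>
               r X = mat_rank (assoc_matrix X n1 n2)"
    and h4: "\<forall>X. is_tensor X \<longrightarrow> \<not> is_zero X \<longrightarrow> \<not> rank_one X \<longrightarrow>
               3 \<le> card {n. n < length (dims X) \<and> 1 < dims X ! n} \<longrightarrow>
               r X = Max (set (dims X))"
    and M: "1 \<le> M" and N: "2 \<le> N"
  shows "r (diag_tensor M N) = M"
proof -
  have T: "is_tensor (diag_tensor M N)" using diag_tensor M N by simp
  consider "M = 1" | "2 \<le> M" "N = 2" | "2 \<le> M" "3 \<le> N" using M N by linarith
  then show ?thesis
  proof cases
    case 1
    have "rank_one (diag_tensor M N)" using diag_one_r1[of N] N 1 by simp
    then show ?thesis using h1 T 1 by blast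
  next
    case 2
    have "{n. n < length (dims (diag_tensor M N)) \<and> 1 < dims (diag_tensor M N) ! n} = {0, 1}"
      using 2 by auto
    then have "r (diag_tensor M N) = mat_rank (assoc_matrix (diag_tensor M N) 0 1)"
      using h3[rule_format, OF T, of 0 1] 2 by simp
    then show ?thesis using 2 diag_assoc mat_rank_one_mat by simp
  next
    case 3
    have "{n. n < length (dims (diag_tensor M N)) \<and> 1 < dims (diag_tensor M N) ! n} = {..<N}"
      using 3 by auto
    then have "r (diag_tensor M N) = Max (set (dims (diag_tensor M N)))"
      using h4[rule_format, OF T] 3 M diag_not_zero diag_not_r1 by simp
    then show ?thesis using 3 by simp
  qed
qed


lemma qzc3:
  fixes r :: "tensor \<Rightarrow> nat"
  assumes h1: "\<forall>X. is_tensor X \<longrightarrow> ((r X = 0 \<longleftrightarrow> is_zero X) \<and> (r X = 1 \<longleftrightarrow> rank_one X))"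
    and h3: "\<forall>X n1 n2. is_tensor X \<longrightarrow> n1 < n2 \<longrightarrow> n2 < length (dims X) \<longrightarrow>
               {n. n < length (dims X) \<and> 1 < dims X ! n} = {n1, n2} \<longrightarrow>
               r X = mat_rank (assoc_matrix X n1 n2)"
    and T: "is_tensor X" and L: "2 \<le> length (dims X)"
    and one: "\<forall>k. 2 \<le> k \<longrightarrow> k < length (dims X) \<longrightarrow> dims X ! k = 1"
  shows "r X = mat_rank (assoc_matrix X 0 1)"
proof (cases "1 < dims X ! 0 \<and> 1 < dims X ! 1")
  case True
  have "{n. n < length (dims X) \<and> 1 < dims X ! n} = {0, 1}"
  proof (rule Set.set_eqI, rule iffI)
    fix n :: nat assume "n \<in> {n. n < length (dims X) \<and> 1 < dims X ! n}"
    then show "n \<in> {0, 1}" using one by (cases "2 \<le> n") auto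
  next
    fix n :: nat assume "n \<in> {0, 1}"
    then show "n \<in> {n. n < length (dims X) \<and> 1 < dims X ! n}" using True L by auto
  qed
  then show ?thesis using h3[rule_format, OF T, of 0 1] L by simp
next
  case False
  let ?N = "length (dims X)"
  let ?A = "assoc_matrix X 0 1"
  have d0: "0 < dims X ! 0" "0 < dims X ! 1" using tensor_pos[OF T, of 0] tensor_pos[OF T, of 1] L by force+
  have dA: "dim_row ?A = dims X ! 0" "dim_col ?A = dims X ! 1" unfolding assoc_matrix_def by auto
  have key: "entry X is = ?A $$ (is ! 0, is ! 1)" if v: "valid_idx (dims X) is" for "is"
  proof -
    have "is = (replicate ?N 0)[0 := is ! 0, 1 := is ! 1]"
    proof (rule nth_equalityI)
      show "length is = length ((replicate ?N 0)[0 := is ! 0, 1 := is ! 1])" using v unfolding valid_idx_def by simp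
      fix k assume k: "k < length is"
      then have kN: "k < ?N" using v unfolding valid_idx_def by simp
      show "is ! k = (replicate ?N 0)[0 := is ! 0, 1 := is ! 1] ! k"
      proof (cases "2 \<le> k")
        case True
        then have "is ! k < 1" using v one kN unfolding valid_idx_def by auto
        then show ?thesis using True kN by (simp add: nth_list_update)
      next
        case False
        then have "k = 0 \<or> k = 1" by auto
        then show ?thesis using kN L by (auto simp: nth_list_update)
      qed
    qed
    moreover have "is ! 0 < dims X ! 0" "is ! 1 < dims X ! 1" using v L unfolding valid_idx_def by force+
    ultimately show ?thesis unfolding assoc_matrix_def by simp
  qed
  have thin: "dim_row ?A = 1 \<or> dim_col ?A = 1" using False d0 dA by linarith
  show ?thesis
  proof (cases "is_zero X")
    case True
    then have "r X = 0" using h1 T by blast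
    moreover have "mat_rank ?A = 0"
    proof (rule mat_rank_zero, intro allI impI)
      fix i j assume "i < dim_row ?A" "j < dim_col ?A"
      then show "?A $$ (i, j) = 0" using True dA unfolding is_zero_def assoc_matrix_def by simp
    qed
    ultimately show ?thesis by simp
  next
    case nz: False
    obtain i0 where i0: "entry X i0 \<noteq> 0" using nz unfolding is_zero_def by auto
    have v0: "valid_idx (dims X) i0" using tensor_valid[OF T i0] .
    have "i0 ! 0 < dims X ! 0" "i0 ! 1 < dims X ! 1" using v0 L unfolding valid_idx_def by force+
    then have "1 \<le> mat_rank ?A"
      using mat_rank_pos[of "i0 ! 0" ?A "i0 ! 1"] v0 key[OF v0] i0 dA L unfolding valid_idx_def by auto
    moreover have "mat_rank ?A \<le> 1" using mat_rank_thin thin by blast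
    moreover have "rank_one X"
    proof (rule few_modes_rank_one[OF T nz, of "if 1 < dims X ! 0 then 0 else 1"])
      show "(if 1 < dims X ! 0 then 0 else 1) < ?N" using L by auto
      show "\<forall>n<?N. n \<noteq> (if 1 < dims X ! 0 then 0 else 1) \<longrightarrow> dims X ! n = 1"
      proof (intro allI impI)
        fix n assume n: "n < ?N" "n \<noteq> (if 1 < dims X ! 0 then 0 else 1)"
        show "dims X ! n = 1"
        proof (cases "2 \<le> n")
          case True then show ?thesis using one n by auto
        next
          case False
          then have "n = 0 \<or> n = 1" by auto
          then show ?thesis using n False d0 \<open>\<not> (1 < dims X ! 0 \<and> 1 < dims X ! 1)\<close>
            by (elim disjE) (simp_all split: if_splits)
        qed
      qed
    qed
    then have "r X = 1" using h1 T by blast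
    ultimately show ?thesis by simp
  qed
qed


lemma qzc6:
  fixes r :: "tensor \<Rightarrow> nat"
  assumes h1: "\<forall>X. is_tensor X \<longrightarrow> ((r X = 0 \<longleftrightarrow> is_zero X) \<and> (r X = 1 \<longleftrightarrow> rank_one X))"
    and h3: "\<forall>X n1 n2. is_tensor X \<longrightarrow> n1 < n2 \<longrightarrow> n2 < length (dims X) \<longrightarrow>
               {n. n < length (dims X) \<and> 1 < dims X ! n} = {n1, n2} \<longrightarrow>
               r X = mat_rank (assoc_matrix X n1 n2)"
    and h4: "\<forall>X. is_tensor X \<longrightarrow> \<not> is_zero X \<longrightarrow> \<not> rank_one X \<longrightarrow>
               3 \<le> card {n. n < length (dims X) \<and> 1 < dims X ! n} \<longrightarrow>
               r X = Max (set (dims X))"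
    and T: "is_tensor X" and S: "is_subtensor Y X"
  shows "r Y \<le> r X"
proof -
  let ?N = "length (dims X)"
  have TY: "is_tensor Y" and len: "length (dims Y) = ?N" using S unfolding is_subtensor_def by auto
  have H3: "r Z = mat_rank (assoc_matrix Z n1 n2)" if "is_tensor Z" "n1 < n2" "n2 < length (dims Z)" "NT Z = {n1, n2}" for Z n1 n2
    using h3 that unfolding NT_def by blast
  have H4: "r Z = Max (set (dims Z))" if "is_tensor Z" "\<not> is_zero Z" "\<not> rank_one Z" "3 \<le> card (NT Z)" for Z
    using h4 that unfolding NT_def by blast
  have H1z: "r Z = 0 \<longleftrightarrow> is_zero Z" if "is_tensor Z" for Z using h1 that by blast
  have H1o: "r Z = 1 \<longleftrightarrow> rank_one Z" if "is_tensor Z" for Z using h1 that by blast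
  show ?thesis
  proof (cases "is_zero Y")
    case True
    then show ?thesis using H1z[OF TY] by simp
  next
    case nzY: False
    have nzX: "\<not> is_zero X" using sub_nz[OF S nzY] .
    show ?thesis
    proof (cases "rank_one Y")
      case True
      then have "r Y = 1" using H1o[OF TY] by blast
      moreover have "r X \<noteq> 0" using H1z[OF T] nzX by blast
      ultimately show ?thesis by simp
    next
      case nrY: False
      have nrX: "\<not> rank_one X" using sub_r1[OF S] nzY nrY by blast
      have c2: "2 \<le> card (NT Y)" using NT_card_ge2[OF TY nzY nrY] .
      have cle: "card (NT Y) \<le> card (NT X)" using NT_sub[OF S] NT_finite by (rule card_mono[rotated])
      show ?thesis
      proof (cases "3 \<le> card (NT Y)")
        case True
        then show ?thesis using H4[OF TY nzY nrY] H4[OF T nzX nrX] cle Max_sub[OF S] by simp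
      next
        case False
        then have "card (NT Y) = 2" using c2 by simp
        then obtain n1 n2 where nn: "NT Y = {n1, n2}" "n1 < n2"
          by (metis card_2_iff linorder_neqE_nat insert_commute)
        have n2: "n2 < ?N" using nn len unfolding NT_def by auto
        have n1: "n1 < ?N" using nn len unfolding NT_def by auto
        have rY: "r Y = mat_rank (assoc_matrix Y n1 n2)" using H3[OF TY nn(2)] n2 len nn(1) by simp
        show ?thesis
        proof (cases "3 \<le> card (NT X)")
          case True
          have "mat_rank (assoc_matrix Y n1 n2) \<le> dims Y ! n2"
            using mat_rank_le_col[of "assoc_matrix Y n1 n2"] unfolding assoc_matrix_def by simp
          also have "\<dots> \<le> Max (set (dims Y))" using n2 len by (intro Max_ge) auto
          also have "\<dots> \<le> Max (set (dims X))" using Max_sub[OF S] .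
          finally show ?thesis using rY H4[OF T nzX nrX True] by simp
        next
          case False
          then have "card (NT X) \<le> card (NT Y)" using \<open>card (NT Y) = 2\<close> by simp
          then have NTeq: "NT X = NT Y" using NT_sub[OF S] NT_finite by (metis card_seteq)
          have rX: "r X = mat_rank (assoc_matrix X n1 n2)" using H3[OF T nn(2) n2] NTeq nn(1) by simp
          obtain \<sigma> where sb: "\<forall>n<?N. strict_mono_on {..<dims Y ! n} (\<sigma> n) \<and> (\<forall>j<dims Y ! n. \<sigma> n j < dims X ! n)"
            and se: "\<forall>is. valid_idx (dims Y) is \<longrightarrow>
              entry Y is = entry X (map (\<lambda>n. \<sigma> n (is ! n)) [0..<?N])"
            using S unfolding is_subtensor_def by blast
          let ?AX = "assoc_matrix X n1 n2"
          have AXc: "?AX \<in> carrier_mat (dims X ! n1) (dims X ! n2)" unfolding assoc_matrix_def by simp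
          have eqm: "assoc_matrix Y n1 n2 = mat (dims Y ! n1) (dims Y ! n2) (\<lambda>(i,j). ?AX $$ (\<sigma> n1 i, \<sigma> n2 j))"
          proof (rule eq_matI)
            fix i j assume ij: "i < dim_row (mat (dims Y ! n1) (dims Y ! n2) (\<lambda>(i,j). ?AX $$ (\<sigma> n1 i, \<sigma> n2 j)))"
              "j < dim_col (mat (dims Y ! n1) (dims Y ! n2) (\<lambda>(i,j). ?AX $$ (\<sigma> n1 i, \<sigma> n2 j)))"
            then have i: "i < dims Y ! n1" and j: "j < dims Y ! n2" by auto
            let ?is = "(replicate ?N 0)[n1 := i, n2 := j]"
            have v: "valid_idx (dims Y) ?is"
              unfolding valid_idx_def using i j len tensor_pos[OF TY] nn(2) n1 n2
              by (auto simp: nth_list_update)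
            have si: "\<sigma> n1 i < dims X ! n1" and sj: "\<sigma> n2 j < dims X ! n2" using sb i j n1 n2 by auto
            have mapeq: "map (\<lambda>n. \<sigma> n (?is ! n)) [0..<?N] = (replicate ?N 0)[n1 := \<sigma> n1 i, n2 := \<sigma> n2 j]"
            proof (rule nth_equalityI)
              fix k assume "k < length (map (\<lambda>n. \<sigma> n (?is ! n)) [0..<?N])"
              then have k: "k < ?N" by simp
              show "map (\<lambda>n. \<sigma> n (?is ! n)) [0..<?N] ! k = (replicate ?N 0)[n1 := \<sigma> n1 i, n2 := \<sigma> n2 j] ! k"
              proof (cases "k = n1 \<or> k = n2")
                case True
                then show ?thesis using k nn(2) n1 n2 by (auto simp: nth_list_update)
              next
                case False
                then have "k \<notin> NT X" using NTeq nn(1) by auto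
                then have "dims X ! k \<le> 1" using k unfolding NT_def by auto
                moreover have "\<sigma> k 0 < dims X ! k" using sb k tensor_pos[OF TY, of k] len by auto
                ultimately have "\<sigma> k 0 = 0" by simp
                then show ?thesis using False k by (simp add: nth_list_update)
              qed
            qed simp
            have "assoc_matrix Y n1 n2 $$ (i, j) = entry Y ?is"
              using i j len unfolding assoc_matrix_def by simp
            also have "\<dots> = entry X ((replicate ?N 0)[n1 := \<sigma> n1 i, n2 := \<sigma> n2 j])"
              using se v mapeq by simp
            also have "\<dots> = ?AX $$ (\<sigma> n1 i, \<sigma> n2 j)" using si sj unfolding assoc_matrix_def by simp
            finally show "assoc_matrix Y n1 n2 $$ (i, j) = mat (dims Y ! n1) (dims Y ! n2) (\<lambda>(i,j). ?AX $$ (\<sigma> n1 i, \<sigma> n2 j)) $$ (i, j)"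
              using i j by simp
          qed (auto simp: assoc_matrix_def len)
          have "vec_space.rank (dims Y ! n1) (mat (dims Y ! n1) (dims Y ! n2) (\<lambda>(i,j). ?AX $$ (\<sigma> n1 i, \<sigma> n2 j)))
                  \<le> vec_space.rank (dims X ! n1) ?AX"
            by (rule rank_sub_le[OF AXc]) (use sb n1 n2 in auto)
          then have "mat_rank (assoc_matrix Y n1 n2) \<le> mat_rank ?AX"
            unfolding mat_rank_def eqm using AXc by simp
          then show ?thesis using rY rX by simp
        qed
      qed
    qed
  qed
qed

theorem proposition3p9:
  fixes r :: "tensor \<Rightarrow> nat"
  assumes h1: "\<forall>X. is_tensor X \<longrightarrow> ((r X = 0 \<longleftrightarrow> is_zero X) \<and> (r X = 1 \<longleftrightarrow> rank_one X))"
    and h2: "\<forall>X Y. tsim X Y \<longrightarrow> r X = r Y"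
    and h3: "\<forall>X n1 n2. is_tensor X \<longrightarrow> n1 < n2 \<longrightarrow> n2 < length (dims X) \<longrightarrow>
               {n. n < length (dims X) \<and> 1 < dims X ! n} = {n1, n2} \<longrightarrow>
               r X = mat_rank (assoc_matrix X n1 n2)"
    and h4: "\<forall>X. is_tensor X \<longrightarrow> \<not> is_zero X \<longrightarrow> \<not> rank_one X \<longrightarrow>
               3 \<le> card {n. n < length (dims X) \<and> 1 < dims X ! n} \<longrightarrow>
               r X = Max (set (dims X))"
  shows "qzc_rank r"
  unfolding qzc_rank_def
proof (intro conjI allI impI)
  show "\<And>X. is_tensor X \<Longrightarrow> (r X = 0) = is_zero X" using h1 by blast
  show "\<And>X. is_tensor X \<Longrightarrow> (r X = 1) = rank_one X" using h1 by blast
  show "\<And>M N. 1 \<le> M \<Longrightarrow> 2 \<le> N \<Longrightarrow> r (diag_tensor M N) = M"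
    using qzc2[OF h1 h3 h4] by blast
  show "\<And>X. is_tensor X \<Longrightarrow> 2 \<le> length (dims X) \<Longrightarrow>
         \<forall>k. 2 \<le> k \<longrightarrow> k < length (dims X) \<longrightarrow> dims X ! k = 1 \<Longrightarrow>
         r X = mat_rank (assoc_matrix X 0 1)"
    using qzc3[OF h1 h3] by blast
  show "\<And>X \<alpha>. is_tensor X \<Longrightarrow> \<alpha> \<noteq> 0 \<Longrightarrow> r (scale_tensor \<alpha> X) = r X"
    using h2 tsim_scale by metis
  show "\<And>X Y. is_tensor X \<Longrightarrow> is_mode_perm Y X \<Longrightarrow> r Y = r X"
    using h2 tsim_perm by metis
  show "\<And>X Y. is_tensor X \<Longrightarrow> is_subtensor Y X \<Longrightarrow> r Y \<le> r X"
    using qzc6[OF h1 h3 h4] by blast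
qed

end
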